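(* Let $(y_1,x_1),\dots,(y_\ell,x_\ell)\in\mathbb{R}^3\times\mathbb{R}^3$, $c_1^2,\dots,c_\ell^2\ge0$, $\hat\mu\in\mathbb{R}$, and let $\hat{\mathcal{D}}$ be an admissible dual matrix. Suppose that $$-\hat\mu\|z_0\|_2^2+2\sum_{i=1}^\ell z_i^\top[\hat{\mathcal{D}}]_{0i}z_i-\sum_{i=1}^\ell z_0^\top\big(2[\hat{\mathcal{D}}]_{0i}-Q_i+c_i^2I_4\big)z_i\ge0\quad\text{for all }z_0,\dots,z_\ell\in\mathbb{R}^4.$$ Then $[\hat{\mathcal{D}}]_{0i}\succeq0$ for every $i=1,\dots,\ell$. Moreover, if $c_i^2\ne\lambda_{\min}(Q_i)$ and $c_i^2\ne\lambda_{\max}(Q_i)$, then $[\hat{\mathcal{D}}]_{0i}\succ0$.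
   Context: For $w=[w_1;w_2;w_3;w_4]\in\mathbb{S}^3$, $R(w)=\begin{bmatrix} w_1^2+w_2^2-w_3^2-w_4^2 & 2(w_2w_3-w_1w_4) & 2(w_2w_4+w_1w_3)\\ 2(w_2w_3+w_1w_4) & w_1^2+w_3^2-w_2^2-w_4^2 & 2(w_3w_4-w_1w_2)\\ 2(w_2w_4-w_1w_3) & 2(w_3w_4+w_1w_2) & w_1^2+w_4^2-w_2^2-w_3^2\end{bmatrix}\in SO(3)$. $Q_i$ is the unique symmetric $4\times4$ matrix with $w^\top Q_iw=\|y_i-R(w)x_i\|_2^2$ for all $w\in\mathbb{S}^3$; $\lambda_{\min},\lambda_{\max}$ are its extreme eigenvalues. For $\mathcal{A}\in\mathbb{R}^{4(\ell+1)\times4(\ell+1)}$, $[\mathcal{A}]_{ij}$ ($0\le i,j\le\ell$) is the $4\times4$ block in rows $4i+1..4i+4$, columns $4j+1..4j+4$. An admissible dual matrix is a symmetric $\mathcal{D}\in\mathbb{R}^{4(\ell+1)\times4(\ell+1)}$ with $[\mathcal{D}]_{ii}+2[\mathcal{D}]_{0i}=0$ for $i=1,\dots,\ell$ and all blocks other than $[\mathcal{D}]_{ii},[\mathcal{D}]_{0i},[\mathcal{D}]_{i0}$ ($i\ge1$) equal to zero. *)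

theory Defs
  imports "HOL-Analysis.Analysis"
begin

definition rotR :: "real^4 \<Rightarrow> real^3^3" where
  "rotR w = (let w1 = w$1; w2 = w$2; w3 = w$3; w4 = w$4 in
     vector [vector [w1^2+w2^2-w3^2-w4^2, 2*(w2*w3-w1*w4), 2*(w2*w4+w1*w3)],
             vector [2*(w2*w3+w1*w4), w1^2+w3^2-w2^2-w4^2, 2*(w3*w4-w1*w2)],
             vector [2*(w2*w4-w1*w3), 2*(w3*w4+w1*w2), w1^2+w4^2-w2^2-w3^2]])"

definition Qmat :: "real^3 \<Rightarrow> real^3 \<Rightarrow> real^4^4" where
  "Qmat y x = (THE Q. transpose Q = Q \<and>
      (\<forall>w::real^4. norm w = 1 \<longrightarrow> w \<bullet> (Q *v w) = (norm (y - rotR w *v x))^2))"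

definition eigvals :: "real^4^4 \<Rightarrow> real set" where
  "eigvals A = {e. \<exists>v::real^4. v \<noteq> 0 \<and> A *v v = e *\<^sub>R v}"

definition lam_min :: "real^4^4 \<Rightarrow> real" where "lam_min A = Min (eigvals A)"
definition lam_max :: "real^4^4 \<Rightarrow> real" where "lam_max A = Max (eigvals A)"

definition psd :: "real^4^4 \<Rightarrow> bool" where
  "psd A \<longleftrightarrow> transpose A = A \<and> (\<forall>z. 0 \<le> z \<bullet> (A *v z))"

definition pd :: "real^4^4 \<Rightarrow> bool" where
  "pd A \<longleftrightarrow> transpose A = A \<and> (\<forall>z. z \<noteq> 0 \<longrightarrow> 0 < z \<bullet> (A *v z))"

(* A 4(l+1) x 4(l+1) matrix given by its 4x4 blocks D i j, 0 <= i,j <= l *)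
definition admissible_dual :: "nat \<Rightarrow> (nat \<Rightarrow> nat \<Rightarrow> real^4^4) \<Rightarrow> bool" where
  "admissible_dual l D \<longleftrightarrow>
     (\<forall>i\<le>l. \<forall>j\<le>l. D j i = transpose (D i j)) \<and>
     (\<forall>i\<in>{1..l}. D i i + 2 *\<^sub>R D 0 i = 0) \<and>
     (\<forall>i\<le>l. \<forall>j\<le>l. \<not> (i = j \<and> 1 \<le> i) \<and> \<not> (i = 0 \<and> 1 \<le> j) \<and> \<not> (j = 0 \<and> 1 \<le> i)
        \<longrightarrow> D i j = 0)"

end

theory Submission imports Defs begin

lemma vector_4 [simp]:
 "(vector [a,b,c,d] ::('a::zero)^4)$1 = a"
 "(vector [a,b,c,d] ::('a::zero)^4)$2 = b"
 "(vector [a,b,c,d] ::('a::zero)^4)$3 = c"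
 "(vector [a,b,c,d] ::('a::zero)^4)$4 = d"
  unfolding vector_def by simp_all

definition Pm :: "real^3 \<Rightarrow> real^3 \<Rightarrow> real^4^4" where
 "Pm y x = (let x1 = x$1; x2 = x$2; x3 = x$3; y1 = y$1; y2 = y$2; y3 = y$3 in
   vector [vector [y1*x1+y2*x2+y3*x3, y3*x2-y2*x3, y1*x3-y3*x1, y2*x1-y1*x2],
           vector [y3*x2-y2*x3, y1*x1-y2*x2-y3*x3, y1*x2+y2*x1, y1*x3+y3*x1],
           vector [y1*x3-y3*x1, y1*x2+y2*x1, y2*x2-y1*x1-y3*x3, y2*x3+y3*x2],
           vector [y2*x1-y1*x2, y1*x3+y3*x1, y2*x3+y3*x2, y3*x3-y1*x1-y2*x2]])"

lemma Pm_sym: "transpose (Pm y x) = Pm y x"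
  unfolding Pm_def Let_def transpose_def vec_eq_iff forall_4 by simp

lemma Pm_form: "y \<bullet> (rotR w *v x) = w \<bullet> (Pm y x *v w)"
  unfolding Pm_def rotR_def Let_def inner_vec_def matrix_vector_mult_def sum_3 sum_4
  by simp algebra

lemma rot_norm: "(norm (rotR w *v x))^2 = (w \<bullet> w)^2 * (x \<bullet> x)"
  unfolding power2_norm_eq_inner rotR_def Let_def inner_vec_def matrix_vector_mult_def sum_3 sum_4
  by simp algebra

lemma Pm_sq: "Pm y x *v (Pm y x *v v) = ((x \<bullet> x) * (y \<bullet> y)) *\<^sub>R v"
  unfolding Pm_def Let_def inner_vec_def matrix_vector_mult_def sum_3 sum_4 vec_eq_iff forall_4
  by simp algebra

definition Q0 :: "real^3 \<Rightarrow> real^3 \<Rightarrow> real^4^4" where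
 "Q0 y x = (x \<bullet> x + y \<bullet> y) *\<^sub>R mat 1 - 2 *\<^sub>R Pm y x"

lemma Q0_sym: "transpose (Q0 y x) = Q0 y x"
  unfolding Q0_def Pm_def Let_def transpose_def vec_eq_iff forall_4 mat_def by simp

lemma Q0_apply: "Q0 y x *v w = (x \<bullet> x + y \<bullet> y) *\<^sub>R w - 2 *\<^sub>R (Pm y x *v w)"
  unfolding Q0_def by (simp add: matrix_vector_mult_diff_rdistrib scaleR_matrix_vector_assoc[symmetric])

lemma Q0_form: "norm w = 1 \<Longrightarrow> w \<bullet> (Q0 y x *v w) = (norm (y - rotR w *v x))^2"
proof -
  assume "norm w = 1"
  hence ww: "w \<bullet> w = 1" by (simp add: norm_eq_1)
  have "(norm (y - rotR w *v x))^2 = y \<bullet> y - 2 * (y \<bullet> (rotR w *v x)) + (norm (rotR w *v x))^2"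
    by (simp add: power2_norm_eq_inner inner_diff_left inner_diff_right inner_commute)
  also have "\<dots> = y \<bullet> y - 2 * (w \<bullet> (Pm y x *v w)) + x \<bullet> x"
    by (simp add: Pm_form rot_norm ww)
  finally show ?thesis by (simp add: Q0_apply inner_diff_right ww)
qed

lemma sym_swap: "transpose A = A \<Longrightarrow> u \<bullet> (A *v v) = v \<bullet> ((A::real^'n^'n) *v u)"
  by (metis dot_lmul_matrix inner_commute transpose_matrix_vector)

lemma quad_zero:
  fixes A :: "real^'n^'n"
  assumes "transpose A = A" "\<forall>w. norm w = 1 \<longrightarrow> w \<bullet> (A *v w) = 0"
  shows "A = 0"
proof -
  have all: "w \<bullet> (A *v w) = 0" for w
  proof (cases "w = 0")
    case False
    let ?u = "(1 / norm w) *\<^sub>R w"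
    have "norm ?u = 1" using False by simp
    hence "?u \<bullet> (A *v ?u) = 0" using assms(2) by blast
    hence "(1 / norm w)^2 * (w \<bullet> (A *v w)) = 0"
      by (simp add: matrix_vector_mult_scaleR power2_eq_square)
    thus ?thesis using False by simp
  qed simp
  have "u \<bullet> (A *v v) = 0" for u v
  proof -
    have "(u + v) \<bullet> (A *v (u + v)) = 0" by (rule all)
    hence "u \<bullet> (A *v u) + v \<bullet> (A *v v) + u \<bullet> (A *v v) + v \<bullet> (A *v u) = 0"
      by (simp add: matrix_vector_right_distrib inner_add_left inner_add_right)
    thus ?thesis using all[of u] all[of v] sym_swap[OF assms(1), of u v] by simp
  qed
  hence "A *v v = 0" for v by (metis inner_eq_zero_iff)
  thus ?thesis by (metis matrix_eq matrix_vector_mult_0)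
qed

lemma Qmat_eq: "Qmat y x = Q0 y x"
  unfolding Qmat_def
proof (rule the_equality)
  show "transpose (Q0 y x) = Q0 y x \<and> (\<forall>w. norm w = 1 \<longrightarrow> w \<bullet> (Q0 y x *v w) = (norm (y - rotR w *v x))\<^sup>2)"
    using Q0_sym Q0_form by blast
next
  fix Q assume h: "transpose Q = Q \<and> (\<forall>w::real^4. norm w = 1 \<longrightarrow> w \<bullet> (Q *v w) = (norm (y - rotR w *v x))\<^sup>2)"
  have "Q - Q0 y x = 0"
  proof (rule quad_zero)
    show "transpose (Q - Q0 y x) = Q - Q0 y x"
    proof -
      have "transpose (Q - Q0 y x) = transpose Q - transpose (Q0 y x)"
        by (simp add: transpose_def vec_eq_iff)
      thus ?thesis using h Q0_sym by simp
    qed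
    show "\<forall>w. norm w = 1 \<longrightarrow> w \<bullet> ((Q - Q0 y x) *v w) = 0"
      using h Q0_form by (simp add: matrix_vector_mult_diff_rdistrib inner_diff_right)
  qed
  thus "Q = Q0 y x" by simp
qed

lemma Q0_eig:
  assumes "Q0 y x *v v = e *\<^sub>R v" "v \<noteq> 0"
  shows "e = (x \<bullet> x + y \<bullet> y) - 2 * sqrt ((x \<bullet> x) * (y \<bullet> y)) \<or>
         e = (x \<bullet> x + y \<bullet> y) + 2 * sqrt ((x \<bullet> x) * (y \<bullet> y))"
proof -
  define a where "a = x \<bullet> x + y \<bullet> y"
  define t where "t = (a - e) / 2"
  have e1: "a *\<^sub>R v - 2 *\<^sub>R (Pm y x *v v) = e *\<^sub>R v"
    using assms(1) unfolding Q0_apply a_def by simp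
  hence "2 *\<^sub>R (Pm y x *v v) = (a - e) *\<^sub>R v"
    by (simp add: algebra_simps)
  hence "(1/2) *\<^sub>R (2 *\<^sub>R (Pm y x *v v)) = (1/2) *\<^sub>R ((a - e) *\<^sub>R v)" by simp
  hence Pv: "Pm y x *v v = t *\<^sub>R v" unfolding t_def by (simp only: scaleR_scaleR) simp
  have "Pm y x *v (Pm y x *v v) = (t * t) *\<^sub>R v"
    by (simp add: Pv matrix_vector_mult_scaleR)
  hence "(t * t) *\<^sub>R v = ((x \<bullet> x) * (y \<bullet> y)) *\<^sub>R v" using Pm_sq by metis
  hence tt: "t * t = (x \<bullet> x) * (y \<bullet> y)" using assms(2) by (metis scaleR_cancel_right)
  have "t = sqrt ((x \<bullet> x) * (y \<bullet> y)) \<or> t = - sqrt ((x \<bullet> x) * (y \<bullet> y))"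
  proof -
    have "sqrt ((x \<bullet> x) * (y \<bullet> y)) = \<bar>t\<bar>" using tt by (metis power2_eq_square real_sqrt_abs)
    thus ?thesis by (cases "t \<ge> 0") auto
  qed
  thus ?thesis unfolding t_def a_def by auto
qed


lemma psd_zero:
  fixes A :: "real^4^4"
  assumes "psd A" "v \<bullet> (A *v v) = 0"
  shows "A *v v = 0"
proof -
  have sym: "transpose A = A" and nn: "\<And>z. 0 \<le> z \<bullet> (A *v z)" using assms(1) unfolding psd_def by auto
  define u where "u = A *v v"
  define b where "b = u \<bullet> u"
  define a where "a = u \<bullet> (A *v u)"
  have a0: "0 \<le> a" unfolding a_def by (rule nn)
  have expand: "(v + t *\<^sub>R u) \<bullet> (A *v (v + t *\<^sub>R u)) = 2 * t * b + t^2 * a" for t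
  proof -
    have "(v + t *\<^sub>R u) \<bullet> (A *v (v + t *\<^sub>R u)) =
          v \<bullet> (A *v v) + t * (v \<bullet> (A *v u)) + t * (u \<bullet> (A *v v)) + t * t * (u \<bullet> (A *v u))"
      by (simp add: matrix_vector_right_distrib matrix_vector_mult_scaleR inner_add_left inner_add_right algebra_simps)
    also have "v \<bullet> (A *v u) = u \<bullet> (A *v v)" by (rule sym_swap[OF sym])
    finally show ?thesis using assms(2) unfolding a_def b_def u_def by (simp add: power2_eq_square algebra_simps)
  qed
  have "b = 0"
  proof (rule ccontr)
    assume "b \<noteq> 0"
    hence bp: "0 < b" unfolding b_def by simp
    define t where "t = - b / (a + 1)"
    have "(2 * t * b + t^2 * a) * (a + 1)^2 = - (b * b * (a + 2))"
    proof -
      have ta: "t * (a + 1) = - b" unfolding t_def using a0 by simp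
      have "(2 * t * b + t^2 * a) * (a + 1)^2 = 2 * b * (t * (a + 1)) * (a + 1) + a * (t * (a + 1))^2"
        by (simp add: power2_eq_square algebra_simps)
      also have "\<dots> = - (b * b * (a + 2))" unfolding ta by (simp add: power2_eq_square algebra_simps)
      finally show ?thesis .
    qed
    moreover have "- (b * b * (a + 2)) < 0" using bp a0 by (simp add: mult_pos_pos)
    moreover have "0 \<le> (2 * t * b + t^2 * a) * (a + 1)^2"
      using nn[of "v + t *\<^sub>R u"] expand[of t] by simp
    ultimately show False by linarith
  qed
  thus ?thesis unfolding b_def u_def by simp
qed

lemma two_vals:
  fixes S :: "real set"
  assumes "S \<subseteq> {a, b}" "c \<in> S"
  shows "Min S = c \<or> Max S = c"
proof (cases "S = {c}")
  case True thus ?thesis by simp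
next
  case False
  have "S = {a, b}"
  proof
    show "S \<subseteq> {a, b}" by (rule assms(1))
    show "{a, b} \<subseteq> S"
    proof (cases "c = a")
      case True
      with False assms obtain d where "d \<in> S" "d \<noteq> c" by blast
      with assms True show ?thesis by auto
    next
      case ca: False
      with assms have cb: "c = b" by auto
      with False assms obtain d where "d \<in> S" "d \<noteq> c" by blast
      with assms cb show ?thesis by auto
    qed
  qed
  moreover have "c = a \<or> c = b" using assms by auto
  ultimately show ?thesis by (cases "a \<le> b") (auto simp: min_def max_def)
qed

theorem lemmaB2:
  fixes l :: nat and y x :: "nat \<Rightarrow> real^3" and c2 :: "nat \<Rightarrow> real" and mu :: real
    and D :: "nat \<Rightarrow> nat \<Rightarrow> real^4^4"
  assumes c2_nonneg: "\<forall>i\<in>{1..l}. 0 \<le> c2 i"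
    and adm: "admissible_dual l D"
    and hyp: "\<forall>z :: nat \<Rightarrow> real^4.
       0 \<le> - mu * (norm (z 0))^2 + 2 * (\<Sum>i=1..l. z i \<bullet> (D 0 i *v z i))
            - (\<Sum>i=1..l. z 0 \<bullet> ((2 *\<^sub>R D 0 i - Qmat (y i) (x i) + c2 i *\<^sub>R mat 1) *v z i))"
  shows "\<forall>i\<in>{1..l}. psd (D 0 i) \<and>
           (c2 i \<noteq> lam_min (Qmat (y i) (x i)) \<and> c2 i \<noteq> lam_max (Qmat (y i) (x i))
              \<longrightarrow> pd (D 0 i))"
proof
  fix i assume iI: "i \<in> {1..l}"
  hence i0: "i \<noteq> 0" and il: "i \<le> l" by auto
  have Dii: "D i i = transpose (D i i)" using adm il unfolding admissible_dual_def by blast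
  have "D i i + 2 *\<^sub>R D 0 i = 0" using adm iI unfolding admissible_dual_def by blast
  hence "D i i = - (2 *\<^sub>R D 0 i)" by (simp add: eq_neg_iff_add_eq_0)
  hence D0i: "D 0 i = (- 1/2) *\<^sub>R D i i" by simp
  have sym: "transpose (D 0 i) = D 0 i"
    unfolding D0i transpose_scalar using Dii by simp
  have nn: "0 \<le> v \<bullet> (D 0 i *v v)" for v
  proof -
    define z :: "nat \<Rightarrow> real^4" where "z = (\<lambda>j. if j = i then v else 0)"
    have z0: "z 0 = 0" using i0 unfolding z_def by simp
    have s1: "(\<Sum>j=1..l. z j \<bullet> (D 0 j *v z j)) = v \<bullet> (D 0 i *v v)"
    proof -
      have "(\<Sum>j=1..l. z j \<bullet> (D 0 j *v z j)) = (\<Sum>j=1..l. if j = i then v \<bullet> (D 0 i *v v) else 0)"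
        by (rule sum.cong) (auto simp: z_def)
      thus ?thesis using iI by simp
    qed
    show ?thesis using hyp[rule_format, of z] unfolding s1 z0 by simp
  qed
  have psdD: "psd (D 0 i)" unfolding psd_def using sym nn by blast
  show "psd (D 0 i) \<and>
           (c2 i \<noteq> lam_min (Qmat (y i) (x i)) \<and> c2 i \<noteq> lam_max (Qmat (y i) (x i))
              \<longrightarrow> pd (D 0 i))"
  proof (intro conjI impI)
    show "psd (D 0 i)" by (rule psdD)
    assume ne: "c2 i \<noteq> lam_min (Qmat (y i) (x i)) \<and> c2 i \<noteq> lam_max (Qmat (y i) (x i))"
    define Q where "Q = Qmat (y i) (x i)"
    define M where "M = 2 *\<^sub>R D 0 i - Q + c2 i *\<^sub>R mat 1"
    have "0 < v \<bullet> (D 0 i *v v)" if vnz: "v \<noteq> 0" for v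
    proof (rule ccontr)
      assume "\<not> 0 < v \<bullet> (D 0 i *v v)"
      hence "v \<bullet> (D 0 i *v v) = 0" using nn[of v] by simp
      hence Dv: "D 0 i *v v = 0" by (rule psd_zero[OF psdD])
      have bz: "u \<bullet> (M *v v) = 0" for u
      proof (rule ccontr)
        define b where "b = u \<bullet> (M *v v)"
        assume "u \<bullet> (M *v v) \<noteq> 0"
        hence bnz: "b \<noteq> 0" unfolding b_def by simp
        define s where "s = (\<bar>mu\<bar> * (norm u)^2 + 1) / b"
        define z :: "nat \<Rightarrow> real^4" where "z = (\<lambda>j. if j = 0 then u else if j = i then s *\<^sub>R v else 0)"
        have z0: "z 0 = u" unfolding z_def by simp
        have s1: "(\<Sum>j=1..l. z j \<bullet> (D 0 j *v z j)) = 0"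
        proof -
          have "(\<Sum>j=1..l. z j \<bullet> (D 0 j *v z j)) = (\<Sum>j=1..l. 0)"
            by (rule sum.cong) (auto simp: z_def matrix_vector_mult_scaleR Dv)
          thus ?thesis by simp
        qed
        have s2: "(\<Sum>j=1..l. z 0 \<bullet> ((2 *\<^sub>R D 0 j - Qmat (y j) (x j) + c2 j *\<^sub>R mat 1) *v z j)) = s * b"
        proof -
          have "(\<Sum>j=1..l. z 0 \<bullet> ((2 *\<^sub>R D 0 j - Qmat (y j) (x j) + c2 j *\<^sub>R mat 1) *v z j))
              = (\<Sum>j=1..l. if j = i then s * b else 0)"
            by (rule sum.cong) (auto simp: z_def matrix_vector_mult_scaleR b_def M_def Q_def)
          thus ?thesis using iI by simp
        qed
        have "s * b = \<bar>mu\<bar> * (norm u)^2 + 1" unfolding s_def using bnz by simp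
        moreover have "- mu * (norm u)^2 \<le> \<bar>mu\<bar> * (norm u)^2"
          by (metis abs_ge_minus_self mult_minus_left mult_right_mono zero_le_power2)
        moreover have "0 \<le> - mu * (norm (z 0))^2 + 2 * 0 - s * b"
          using hyp[rule_format, of z] unfolding s1 s2 .
        ultimately show False unfolding z0 by simp
      qed
      have "M *v v = 0" using bz[of "M *v v"] by simp
      hence "- (Q *v v) + c2 i *\<^sub>R v = 0"
        unfolding M_def by (simp add: matrix_vector_mult_diff_rdistrib matrix_vector_right_distrib
            matrix_vector_mult_add_rdistrib scaleR_matrix_vector_assoc[symmetric] Dv)
      hence Qv: "Q0 (y i) (x i) *v v = c2 i *\<^sub>R v" unfolding Q_def Qmat_eq by (simp add: algebra_simps)
      hence cin: "c2 i \<in> eigvals Q" unfolding eigvals_def Q_def Qmat_eq using vnz by blast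
      have sub: "eigvals Q \<subseteq> {(x i \<bullet> x i + y i \<bullet> y i) - 2 * sqrt ((x i \<bullet> x i) * (y i \<bullet> y i)),
                                 (x i \<bullet> x i + y i \<bullet> y i) + 2 * sqrt ((x i \<bullet> x i) * (y i \<bullet> y i))}"
        unfolding eigvals_def Q_def Qmat_eq using Q0_eig by blast
      from two_vals[OF sub cin] ne show False unfolding lam_min_def lam_max_def Q_def by auto
    qed
    thus "pd (D 0 i)" unfolding pd_def using sym by blast
  qed
qed

end
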